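(* Let $m\ge 2$ and let $C_1,\dots,C_m\subset\mathbb{R}^n$ be nonempty, closed, convex sets that are pairwise disjoint ($C_i\cap C_j=\varnothing$ for $i\neq j$). Let $C=C_1\times\cdots\times C_m$ and $D(a)=\sum_{i=1}^m\|a_i-a_{i+1}\|$ with $a_{m+1}=a_1$. Then $a^*=(a_1^*,\dots,a_m^* )\in C$ is an optimal solution of $\min_{a\in C}D(a)$ if and only if there exist vectors $n_i\in N_{C_i}(a_i^* )$, $i=1,\dots,m$, such that for each $i=1,\dots,m$ $$\frac{a_i^*-a_{i-1}^*}{\|a_i^*-a_{i-1}^*\|}+\frac{a_i^*-a_{i+1}^*}{\|a_i^*-a_{i+1}^*\|}+n_i=0,$$ with indices cyclic ($a_0^*=a_m^*$, $a_{m+1}^*=a_1^*$). Moreover, in this case $n_1+n_2+\cdots+n_m=0$.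
   Context: For a convex set $K\subset\mathbb{R}^n$ and $x\in K$, the normal cone is $N_K(x)=\{v\in\mathbb{R}^n:\langle v,y-x\rangle\le 0\ \forall y\in K\}$. *)

theory Defs
  imports "HOL-Analysis.Analysis"
begin

definition normal_cone :: "'a::real_inner set \<Rightarrow> 'a \<Rightarrow> 'a set" where
  "normal_cone K x = {v. \<forall>y\<in>K. inner v (y - x) \<le> 0}"

text \<open>Indices 1..m of the paper are represented as 0..<m; cyclic successor/predecessor.\<close>
definition cyc_succ :: "nat \<Rightarrow> nat \<Rightarrow> nat" where
  "cyc_succ m i = Suc i mod m"

definition cyc_pred :: "nat \<Rightarrow> nat \<Rightarrow> nat" where
  "cyc_pred m i = (i + m - 1) mod m"

definition cyc_D :: "nat \<Rightarrow> (nat \<Rightarrow> 'a::real_normed_vector) \<Rightarrow> real" where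
  "cyc_D m a = (\<Sum>i<m. norm (a i - a (cyc_succ m i)))"

end

theory Submission
  imports Defs
begin
lemma succ_eq: "i < m \<Longrightarrow> cyc_succ m i = (if Suc i = m then 0 else Suc i)"
  unfolding cyc_succ_def by auto
lemma pred_eq: "i < m \<Longrightarrow> cyc_pred m i = (if i = 0 then m - 1 else i - 1)"
proof (cases "i = 0")
  case False
  assume "i < m"
  then have e: "i + m - 1 = (i - 1) + m" using False by simp
  have "(i - 1 + m) mod m = i - 1" using \<open>i<m\<close> by simp
  then show ?thesis using False unfolding cyc_pred_def e by simp
qed (simp add: cyc_pred_def)

lemma deriv_norm_line:
  fixes p d :: "'a::real_inner"
  assumes "p \<noteq> 0"
  shows "((\<lambda>t. norm (p + t *\<^sub>R d)) has_real_derivative (d \<bullet> sgn p)) (at 0)"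
proof -
  have 1: "((\<lambda>t. p + t *\<^sub>R d) has_derivative (\<lambda>h. h *\<^sub>R d)) (at 0)"
    by (auto intro!: derivative_eq_intros)
  have 2: "(norm has_derivative (\<lambda>h. h \<bullet> sgn p)) (at (p + 0 *\<^sub>R d))"
    using has_derivative_norm[OF assms] by simp
  have "((\<lambda>t. norm (p + t *\<^sub>R d)) has_derivative (\<lambda>h. (h *\<^sub>R d) \<bullet> sgn p)) (at 0)"
    using has_derivative_compose[OF 1 2] by simp
  then show ?thesis unfolding has_field_derivative_def
    by (rule has_derivative_eq_rhs) (auto simp: mult.commute)
qed

lemma min_deriv:
  fixes \<phi> :: "real \<Rightarrow> real"
  assumes "(\<phi> has_real_derivative D) (at 0)" "\<And>t. 0 < t \<Longrightarrow> t \<le> 1 \<Longrightarrow> \<phi> 0 \<le> \<phi> t"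
  shows "0 \<le> D"
proof -
  have "(\<phi> has_real_derivative D) (at 0 within {0<..})"
    using assms(1) by (rule has_field_derivative_at_within)
  then have L: "((\<lambda>y. (\<phi> y - \<phi> 0) / (y - 0)) \<longlongrightarrow> D) (at_right 0)"
    unfolding has_field_derivative_iff by simp
  have E: "eventually (\<lambda>y. 0 \<le> (\<phi> y - \<phi> 0) / (y - 0)) (at_right (0::real))"
    unfolding eventually_at_right_field
    by (rule exI[of _ 1]) (auto intro!: divide_nonneg_pos simp: assms(2))
  show ?thesis
    by (rule tendsto_lowerbound[OF L E]) simp
qed

lemma cyc_facts:
  assumes "2 \<le> m" "i < m"
  shows "cyc_succ m i < m" "cyc_pred m i < m" "cyc_succ m i \<noteq> i" "cyc_pred m i \<noteq> i"
    "cyc_succ m (cyc_pred m i) = i" "cyc_pred m (cyc_succ m i) = i"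
  using assms by (auto simp: succ_eq pred_eq)

lemma sum_pred:
  assumes "2 \<le> m"
  shows "(\<Sum>i<m. f (cyc_pred m i)) = (\<Sum>i<m. f i)"
  by (rule sum.reindex_bij_witness[where i="cyc_succ m" and j="cyc_pred m"])
     (use assms cyc_facts in auto)

lemma sum_succ:
  assumes "2 \<le> m"
  shows "(\<Sum>i<m. f (cyc_succ m i)) = (\<Sum>i<m. f i)"
  by (rule sum.reindex_bij_witness[where i="cyc_pred m" and j="cyc_succ m"])
     (use assms cyc_facts in auto)

theorem mainTheorem5:
  fixes m :: nat and C :: "nat \<Rightarrow> 'a::euclidean_space set" and a :: "nat \<Rightarrow> 'a"
  assumes "m \<ge> 2"
    and "\<And>i. i < m \<Longrightarrow> C i \<noteq> {}"
    and "\<And>i. i < m \<Longrightarrow> closed (C i)"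
    and "\<And>i. i < m \<Longrightarrow> convex (C i)"
    and "\<And>i j. i < m \<Longrightarrow> j < m \<Longrightarrow> i \<noteq> j \<Longrightarrow> C i \<inter> C j = {}"
    and "\<And>i. i < m \<Longrightarrow> a i \<in> C i"
  shows "((\<forall>b. (\<forall>i<m. b i \<in> C i) \<longrightarrow> cyc_D m a \<le> cyc_D m b) \<longleftrightarrow>
          (\<exists>nv :: nat \<Rightarrow> 'a. (\<forall>i<m. nv i \<in> normal_cone (C i) (a i)) \<and>
             (\<forall>i<m. (a i - a (cyc_pred m i)) /\<^sub>R norm (a i - a (cyc_pred m i))
                    + (a i - a (cyc_succ m i)) /\<^sub>R norm (a i - a (cyc_succ m i)) + nv i = 0)))
       \<and> (\<forall>nv :: nat \<Rightarrow> 'a. ((\<forall>i<m. nv i \<in> normal_cone (C i) (a i)) \<and>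
             (\<forall>i<m. (a i - a (cyc_pred m i)) /\<^sub>R norm (a i - a (cyc_pred m i))
                    + (a i - a (cyc_succ m i)) /\<^sub>R norm (a i - a (cyc_succ m i)) + nv i = 0))
            \<longrightarrow> (\<Sum>i<m. nv i) = 0)"
proof -
  note cf = cyc_facts[OF assms(1)]
  define S where "S = cyc_succ m"
  define P where "P = cyc_pred m"
  define w where "w k = (a k - a (S k)) /\<^sub>R norm (a k - a (S k))" for k
  have neqS: "a i \<noteq> a (S i)" if "i < m" for i
  proof -
    have Si: "S i < m" "S i \<noteq> i" using cf[OF that] unfolding S_def by auto
    then have "C i \<inter> C (S i) = {}" using assms(5) that by auto
    then show ?thesis using assms(6)[OF that] assms(6)[OF Si(1)] by auto
  qed
  have neqP: "a i \<noteq> a (P i)" if "i < m" for i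
  proof -
    have "P i < m" "S (P i) = i" using cf[OF that] unfolding S_def P_def by auto
    then show ?thesis using neqS[of "P i"] by auto
  qed
  have wP: "(a i - a (P i)) /\<^sub>R norm (a i - a (P i)) = - w (P i)" if "i < m" for i
  proof -
    have "S (P i) = i" using cf[OF that] unfolding S_def P_def by auto
    then have "w (P i) = (a (P i) - a i) /\<^sub>R norm (a i - a (P i))"
      unfolding w_def by (simp only: norm_minus_commute[of "a (P i)" "a i"])
    also have "a (P i) - a i = - (a i - a (P i))" by simp
    also have "(- (a i - a (P i))) /\<^sub>R norm (a i - a (P i)) = - ((a i - a (P i)) /\<^sub>R norm (a i - a (P i)))"
      by (rule scaleR_minus_right)
    finally show ?thesis by simp
  qed
  have eqv: "((a i - a (P i)) /\<^sub>R norm (a i - a (P i)) + (a i - a (S i)) /\<^sub>R norm (a i - a (S i)) + nv i = 0)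
      \<longleftrightarrow> nv i = w (P i) - w i" if "i < m" for i and nv :: "nat \<Rightarrow> 'a"
    unfolding wP[OF that] w_def[of i, symmetric] by (simp add: algebra_simps eq_diff_eq)
  have part2: "(\<Sum>i<m. nv i) = 0" if "\<forall>i<m. nv i = w (P i) - w i" for nv
  proof -
    have "(\<Sum>i<m. nv i) = (\<Sum>i<m. w (P i)) - (\<Sum>i<m. w i)"
      using that by (simp add: sum_subtractf)
    also have "\<dots> = 0" unfolding P_def using sum_pred[OF assms(1)] by simp
    finally show ?thesis .
  qed
  have dir1: "\<exists>nv. (\<forall>i<m. nv i \<in> normal_cone (C i) (a i)) \<and> (\<forall>i<m. nv i = w (P i) - w i)"
    if opt: "\<forall>b. (\<forall>i<m. b i \<in> C i) \<longrightarrow> cyc_D m a \<le> cyc_D m b"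
  proof (intro exI[of _ "\<lambda>i. w (P i) - w i"] conjI allI impI)
    fix i assume im: "i < m"
    show "w (P i) - w i \<in> normal_cone (C i) (a i)"
      unfolding normal_cone_def
    proof (intro CollectI ballI)
      fix y assume y: "y \<in> C i"
      define d where "d = y - a i"
      define p where "p = a i - a (S i)"
      define q where "q = a i - a (P i)"
      have p0: "p \<noteq> 0" and q0: "q \<noteq> 0" using neqS[OF im] neqP[OF im] p_def q_def by auto
      define \<phi> where "\<phi> t = norm (p + t *\<^sub>R d) + norm (q + t *\<^sub>R d)" for t :: real
      have "(\<phi> has_real_derivative (d \<bullet> sgn p + d \<bullet> sgn q)) (at 0)"
        unfolding \<phi>_def by (intro DERIV_add deriv_norm_line p0 q0)
      moreover have "\<phi> 0 \<le> \<phi> t" if t: "0 < t" "t \<le> 1" for t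
      proof -
        define b where "b = a(i := a i + t *\<^sub>R d)"
        have bC: "\<forall>k<m. b k \<in> C k"
        proof (intro allI impI)
          fix k assume k: "k < m"
          show "b k \<in> C k"
          proof (cases "k = i")
            case True
            have "a i + t *\<^sub>R d = (1 - t) *\<^sub>R a i + t *\<^sub>R y"
              unfolding d_def by (simp add: algebra_simps)
            also have "\<dots> \<in> C i"
              using assms(4)[OF im] assms(6)[OF im] y t unfolding convex_def by auto
            finally show ?thesis using True b_def by simp
          qed (use b_def assms(6) k in auto)
        qed
        have tm: "norm (b k - b (S k)) = norm (a k - a (S k))
            + (if k = i then norm (p + t *\<^sub>R d) - norm p else 0)
            + (if k = P i then norm (q + t *\<^sub>R d) - norm q else 0)" if k: "k < m" for k
        proof -
          have iP: "i \<noteq> P i" and SPi: "S (P i) = i" and Si: "S i \<noteq> i"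
            using cf[OF im] unfolding S_def P_def by auto
          consider "k = i" | "k = P i" | "k \<noteq> i" "k \<noteq> P i" by blast
          then show ?thesis
          proof cases
            case 1
            then show ?thesis using iP Si unfolding b_def p_def by (simp add: algebra_simps)
          next
            case 2
            have e1: "b k - b (S k) = - (q + t *\<^sub>R d)"
              using 2 iP SPi unfolding b_def q_def by (simp add: algebra_simps)
            have e2: "norm (a k - a (S k)) = norm q"
              using 2 SPi unfolding q_def by (simp add: norm_minus_commute)
            show ?thesis using 2 iP unfolding e1 e2 norm_minus_cancel by simp
          next
            case 3
            have "S k \<noteq> i"
            proof
              assume "S k = i"
              then have "P (S k) = P i" by simp
              then show False using 3 cf(6)[OF k] unfolding S_def P_def by auto
            qed
            then show ?thesis using 3 unfolding b_def by simp
          qed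
        qed
        have "cyc_D m b = (\<Sum>k<m. norm (a k - a (S k))
            + (if k = i then norm (p + t *\<^sub>R d) - norm p else 0)
            + (if k = P i then norm (q + t *\<^sub>R d) - norm q else 0))"
          unfolding cyc_D_def S_def[symmetric] using tm by (intro sum.cong) auto
        also have "\<dots> = cyc_D m a + (norm (p + t *\<^sub>R d) - norm p) + (norm (q + t *\<^sub>R d) - norm q)"
          using im cf[OF im] unfolding cyc_D_def S_def[symmetric] P_def[symmetric]
          by (simp add: sum.distrib)
        finally have "cyc_D m b = cyc_D m a + (norm (p + t *\<^sub>R d) - norm p) + (norm (q + t *\<^sub>R d) - norm q)" .
        moreover have "cyc_D m a \<le> cyc_D m b" using opt bC by blast
        ultimately show ?thesis unfolding \<phi>_def by simp
      qed
      ultimately have "0 \<le> d \<bullet> sgn p + d \<bullet> sgn q" by (rule min_deriv)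
      moreover have "sgn p = w i" unfolding p_def w_def sgn_div_norm by (simp add: divide_inverse_commute)
      moreover have "sgn q = - w (P i)" using wP[OF im] unfolding q_def sgn_div_norm
        by (simp add: divide_inverse_commute)
      ultimately have "0 \<le> d \<bullet> (w i - w (P i))" by (simp add: inner_diff_right)
      then show "(w (P i) - w i) \<bullet> (y - a i) \<le> 0"
        unfolding d_def by (simp add: inner_commute inner_diff_left inner_diff_right)
    qed
  qed simp
  have dir2: "cyc_D m a \<le> cyc_D m b"
    if nvc: "\<forall>i<m. nv i \<in> normal_cone (C i) (a i)" and nve: "\<forall>i<m. nv i = w (P i) - w i"
      and bC: "\<forall>i<m. b i \<in> C i" for nv b
  proof -
    define d where "d k = b k - a k" for k
    have le: "norm (a k - a (S k)) + w k \<bullet> (d k - d (S k)) \<le> norm (b k - b (S k))"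
      if k: "k < m" for k
    proof -
      define x where "x = a k - a (S k)"
      define y where "y = b k - b (S k)"
      have x0: "x \<noteq> 0" using neqS[OF k] x_def by auto
      have wk: "w k = x /\<^sub>R norm x" unfolding w_def x_def ..
      have nw: "norm (w k) = 1" using x0 wk by simp
      have "w k \<bullet> y \<le> norm (w k) * norm y" by (rule norm_cauchy_schwarz)
      moreover have "w k \<bullet> x = norm x" using x0 wk by (simp add: dot_square_norm power2_eq_square)
      moreover have "d k - d (S k) = y - x" unfolding d_def x_def y_def by (simp add: algebra_simps)
      ultimately show ?thesis using nw unfolding x_def[symmetric] y_def[symmetric]
        by (simp add: inner_diff_right)
    qed
    have "cyc_D m a + ((\<Sum>k<m. w k \<bullet> d k) - (\<Sum>k<m. w k \<bullet> d (S k)))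
        = (\<Sum>k<m. norm (a k - a (S k)) + w k \<bullet> (d k - d (S k)))"
      unfolding cyc_D_def S_def[symmetric] by (simp add: sum.distrib sum_subtractf inner_diff_right)
    also have "\<dots> \<le> cyc_D m b"
      unfolding cyc_D_def S_def[symmetric] using le by (intro sum_mono) auto
    finally have A: "cyc_D m a + ((\<Sum>k<m. w k \<bullet> d k) - (\<Sum>k<m. w k \<bullet> d (S k))) \<le> cyc_D m b" .
    have "(\<Sum>k<m. w k \<bullet> d (S k)) = (\<Sum>k<m. w (P (S k)) \<bullet> d (S k))"
      unfolding S_def P_def by (intro sum.cong) (auto simp: cf(6))
    also have "\<dots> = (\<Sum>k<m. w (P k) \<bullet> d k)"
      unfolding S_def using sum_succ[OF assms(1), of "\<lambda>k. w (P k) \<bullet> d k"] by simp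
    finally have B: "(\<Sum>k<m. w k \<bullet> d (S k)) = (\<Sum>k<m. w (P k) \<bullet> d k)" .
    have "(\<Sum>k<m. w k \<bullet> d k) - (\<Sum>k<m. w (P k) \<bullet> d k) = (\<Sum>k<m. - (nv k \<bullet> d k))"
      using nve by (simp add: sum_subtractf[symmetric] inner_diff_left sum_negf)
    also have "\<dots> \<ge> 0"
    proof (intro sum_nonneg)
      fix k assume "k \<in> {..<m}"
      then have "k < m" by simp
      then show "0 \<le> - (nv k \<bullet> d k)" using nvc bC unfolding normal_cone_def d_def by auto
    qed
    finally show ?thesis using A B by linarith
  qed
  have eqv': "(\<forall>i<m. (a i - a (P i)) /\<^sub>R norm (a i - a (P i)) + (a i - a (S i)) /\<^sub>R norm (a i - a (S i)) + nv i = 0)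
      \<longleftrightarrow> (\<forall>i<m. nv i = w (P i) - w i)" for nv
    using eqv by blast
  show ?thesis
    unfolding S_def[symmetric] P_def[symmetric] eqv'
    using dir1 dir2 part2 by blast
qed
end
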